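(* Let $c,d>0$, $r\in(0,1)$ and $m\in\mathbb{Z}$. Then for every $x\in\mathbb{C}\setminus[-d,c]$, $$\lim_{p\to\infty}\frac{\hat P_{p+m}(x;0,0,c,d;r^{1/p})}{\hat P_p(x;0,0,c,d;r^{1/p})}=\big(cdr(1-r)\big)^{m/2}\rho^m\!\left(\frac{x-r(c-d)}{2\sqrt{rcd(1-r)}}\right),$$ where $\rho(y)=y+\sqrt{y^2-1}$ with the branch of the square root chosen so that $|\rho(y)|>1$ for $y\notin[-1,1]$.
   Context: For base $q\in(0,1)$, the monic polynomials $\hat P_n(x;0,0,c,d;q)$ are defined by $\hat P_{-1}=0$, $\hat P_0=1$, $x\hat P_n=\hat P_{n+1}+q^n(c-d)\hat P_n+q^{n-1}cd(1-q^n)\hat P_{n-1}$. *)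

theory Defs
  imports "HOL-Analysis.Analysis"
begin

text \<open>Pair of consecutive monic polynomials (P_n, P_{n+1}) evaluated at x, for
  parameters c, d and base q, following
  x P_n = P_{n+1} + q^n (c-d) P_n + q^(n-1) c d (1-q^n) P_{n-1},  P_{-1}=0, P_0=1.\<close>
fun Ppair :: "real \<Rightarrow> real \<Rightarrow> real \<Rightarrow> complex \<Rightarrow> nat \<Rightarrow> complex \<times> complex" where
  "Ppair c d q x 0 = (1, x - of_real (c - d))"
| "Ppair c d q x (Suc n) =
     (let (a, b) = Ppair c d q x n in
      (b, (x - of_real (q ^ Suc n * (c - d))) * b
           - of_real (q ^ n * c * d * (1 - q ^ Suc n)) * a))"

text \<open>Phat c d q x n = \<hat>P_n(x;0,0,c,d;q).\<close>
definition Phat :: "real \<Rightarrow> real \<Rightarrow> real \<Rightarrow> complex \<Rightarrow> nat \<Rightarrow> complex" where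
  "Phat c d q x n = fst (Ppair c d q x n)"

definition rho :: "complex \<Rightarrow> complex" where
  "rho y = (THE w. \<exists>s. s\<^sup>2 = y\<^sup>2 - 1 \<and> w = y + s \<and> cmod w > 1)"

end

theory Submission
  imports Defs
begin


definition bigroot :: "complex \<Rightarrow> complex \<Rightarrow> complex" where
  "bigroot X B = (if cmod (X - csqrt (X^2 - 4*B)) \<le> cmod (X + csqrt (X^2 - 4*B))
     then (X + csqrt (X^2 - 4*B))/2 else (X - csqrt (X^2 - 4*B))/2)"

lemma bigroot_prod: "bigroot X B * (X - bigroot X B) = B"
proof -
  define s where "s = csqrt (X^2 - 4*B)"
  have s2: "s^2 = X^2 - 4*B" by (simp add: s_def)
  have 1: "(X + s)/2 * (X - (X + s)/2) = (X^2 - s^2)/4" by (simp add: field_simps power2_eq_square)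
  have 2: "(X - s)/2 * (X - (X - s)/2) = (X^2 - s^2)/4" by (simp add: field_simps power2_eq_square)
  show ?thesis unfolding bigroot_def s_def[symmetric] using 1 2 s2 by auto
qed

lemma bigroot_le: "cmod (X - bigroot X B) \<le> cmod (bigroot X B)"
proof -
  define s where "s = csqrt (X^2 - 4*B)"
  have e1: "X - (X + s)/2 = (X - s)/2" "X - (X - s)/2 = (X + s)/2" by (auto simp: field_simps)
  show ?thesis
  proof (cases "cmod (X - s) \<le> cmod (X + s)")
    case True
    then have "bigroot X B = (X + s)/2" unfolding bigroot_def s_def by simp
    then have "X - bigroot X B = (X - s)/2" by (simp add: field_simps)
    then have "cmod (X - bigroot X B) = cmod (X - s)/2" "cmod (bigroot X B) = cmod (X + s)/2"
      using \<open>bigroot X B = (X + s)/2\<close> by (simp only: norm_divide; simp)+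
    then show ?thesis using True by simp
  next
    case False
    then have "bigroot X B = (X - s)/2" unfolding bigroot_def s_def by simp
    then have "X - bigroot X B = (X + s)/2" by (simp add: field_simps)
    then have "cmod (X - bigroot X B) = cmod (X + s)/2" "cmod (bigroot X B) = cmod (X - s)/2"
      using \<open>bigroot X B = (X - s)/2\<close> by (simp only: norm_divide; simp)+
    then show ?thesis using False by simp
  qed
qed

lemma root_dist:
  fixes u v :: complex and B :: real
  assumes uv: "u * v = of_real B" and B: "B \<ge> 0" and le: "cmod v \<le> cmod u"
  shows "\<exists>t::real. t^2 \<le> 4*B \<and> cmod (u + v - of_real t) \<le> 2*(cmod u - cmod v)"
proof (cases "u = 0")
  case True
  then have "v = 0" using le by simp
  then show ?thesis using True by (intro exI[of _ 0]) (simp add: B)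
next
  case False
  define \<rho> where "\<rho> = cmod u"
  have rp: "\<rho> > 0" using False by (simp add: \<rho>_def)
  define \<beta> where "\<beta> = sqrt B"
  have Bb: "B = \<beta>^2" "\<beta> \<ge> 0" using B by (auto simp: \<beta>_def)
  have v: "v = of_real B * cnj u / of_real (\<rho>^2)"
  proof -
    have "v = of_real B / u" using uv False by (simp add: field_simps mult.commute)
    then show ?thesis by (simp add: complex_div_cnj[of "of_real B" u] \<rho>_def)
  qed
  have cv: "cmod v = B / \<rho>"
    using v rp B by (simp add: norm_divide norm_mult power2_eq_square \<rho>_def)
  have "\<beta>^2 \<le> \<rho>^2" using le cv rp Bb by (simp add: field_simps power2_eq_square \<rho>_def)
  then have bl: "\<beta> \<le> \<rho>" using Bb rp by (simp add: power2_le_iff_abs_le)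
  define a where "a = Re u"
  define b where "b = Im u"
  have ab: "\<bar>a\<bar> \<le> \<rho>" "\<bar>b\<bar> \<le> \<rho>" by (auto simp: a_def b_def \<rho>_def abs_Re_le_cmod abs_Im_le_cmod)
  define t where "t = 2*\<beta>*a/\<rho>"
  have t2: "t^2 \<le> 4*B"
  proof -
    have "t^2 = 4*\<beta>^2*(a^2/\<rho>^2)" by (simp add: t_def power2_eq_square field_simps)
    also have "a^2/\<rho>^2 \<le> 1" using ab rp by (simp add: power2_le_iff_abs_le)
    then have "4*\<beta>^2*(a^2/\<rho>^2) \<le> 4*\<beta>^2*1" by (intro mult_left_mono) auto
    finally show ?thesis using Bb by simp
  qed
  have ReX: "Re (u + v - of_real t) = a * (1 - \<beta>/\<rho>)^2"
    using rp by (simp add: v a_def t_def Bb power2_eq_square field_simps)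
  have ImX: "Im (u + v - of_real t) = b * (1 - \<beta>^2/\<rho>^2)"
    using rp by (simp add: v b_def Bb power2_eq_square field_simps)
  have "cmod (u + v - of_real t) \<le> \<bar>a * (1 - \<beta>/\<rho>)^2\<bar> + \<bar>b * (1 - \<beta>^2/\<rho>^2)\<bar>"
    using cmod_le[of "u + v - of_real t"] ReX ImX by simp
  also have "\<dots> \<le> \<rho> * (1 - \<beta>/\<rho>)^2 + \<rho> * (1 - \<beta>^2/\<rho>^2)"
  proof -
    have "\<beta>^2/\<rho>^2 \<le> 1" using bl Bb rp by (simp add: power_mono)
    then have "\<bar>b * (1 - \<beta>^2/\<rho>^2)\<bar> = \<bar>b\<bar> * (1 - \<beta>^2/\<rho>^2)" by (simp add: abs_mult)
    also have "\<dots> \<le> \<rho> * (1 - \<beta>^2/\<rho>^2)" using ab \<open>\<beta>^2/\<rho>^2 \<le> 1\<close> by (simp add: mult_right_mono)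
    finally have 1: "\<bar>b * (1 - \<beta>^2/\<rho>^2)\<bar> \<le> \<rho> * (1 - \<beta>^2/\<rho>^2)" .
    have "\<bar>a * (1 - \<beta>/\<rho>)^2\<bar> = \<bar>a\<bar> * (1 - \<beta>/\<rho>)^2" by (simp add: abs_mult)
    also have "\<dots> \<le> \<rho> * (1 - \<beta>/\<rho>)^2" using ab by (simp add: mult_right_mono)
    finally show ?thesis using 1 by linarith
  qed
  also have "\<dots> \<le> 2*(cmod u - cmod v)"
  proof -
    have "\<rho> * (1 - \<beta>/\<rho>)^2 = (\<rho> - \<beta>)^2/\<rho>" using rp by (simp add: field_simps power2_eq_square)
    also have "\<dots> \<le> (\<rho> - \<beta>)*(\<rho>+\<beta>)/\<rho>" using rp bl Bb
      by (intro divide_right_mono) (auto simp: power2_eq_square intro: mult_left_mono)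
    finally have 1: "\<rho> * (1 - \<beta>/\<rho>)^2 \<le> (\<rho> - \<beta>)*(\<rho>+\<beta>)/\<rho>" .
    have 2: "\<rho> * (1 - \<beta>^2/\<rho>^2) = (\<rho> - \<beta>)*(\<rho>+\<beta>)/\<rho>" using rp by (simp add: field_simps power2_eq_square)
    have 3: "2*(cmod u - cmod v) = 2*((\<rho> - \<beta>)*(\<rho>+\<beta>)/\<rho>)" using cv rp Bb
      by (simp add: \<rho>_def[symmetric] field_simps power2_eq_square)
    show ?thesis using 1 2 3 by linarith
  qed
  finally show ?thesis using t2 by blast
qed



lemma gap_lemma:
  fixes x u v :: complex
  assumes dl: "\<delta> > 0" "\<forall>y::real. -d - \<delta> \<le> y \<and> y \<le> c + \<delta> \<longrightarrow> cmod (x - of_real y) \<ge> \<delta>"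
    and cd: "c > 0" "d > 0" and s: "0 \<le> s" "s \<le> 1" and bt: "\<beta> \<ge> 1" "(\<beta> - 1)*c*d \<le> \<delta>^2"
    and uv: "u * v = of_real (\<beta>* s*(1-s)*c*d)" "u + v = x - of_real (s*(c-d))" "cmod v \<le> cmod u"
  shows "cmod u - cmod v \<ge> \<delta>/2"
proof -
  define B where "B = \<beta>* s*(1-s)*c*d"
  have B0: "B \<ge> 0" using s bt cd by (simp add: B_def)
  obtain t where t: "t^2 \<le> 4*B" "cmod (u + v - of_real t) \<le> 2*(cmod u - cmod v)"
    using root_dist[OF uv(1)[folded B_def] B0 uv(3)] by blast
  have s14: "s*(1-s) \<le> 1/4"
  proof -
    have "0 \<le> (s - 1/2)^2" by simp
    then show ?thesis by (simp add: power2_eq_square algebra_simps)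
  qed
  have ex: "4*B \<le> 4* s*(1-s)*c*d + (\<beta>-1)*c*d"
  proof -
    have "4*B = 4* s*(1-s)*c*d + 4*(\<beta>-1)*c*d*(s*(1-s))" by (simp add: B_def algebra_simps)
    also have "4*(\<beta>-1)*c*d*(s*(1-s)) \<le> 4*(\<beta>-1)*c*d*(1/4)"
      using s14 bt cd by (intro mult_left_mono) auto
    finally show ?thesis by linarith
  qed
  have up: "4*B \<le> (c - s*(c-d) + \<delta>)^2"
  proof -
    have "(c - s*(c-d))^2 - 4* s*(1-s)*c*d = ((1-s)*c - s*d)^2" by (simp add: power2_eq_square algebra_simps)
    then have 1: "4* s*(1-s)*c*d \<le> (c - s*(c-d))^2" by (metis diff_ge_0_iff_ge zero_le_power2)
    have 2: "c - s*(c-d) \<ge> 0"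
    proof -
      have "c - s*(c-d) = (1-s)*c + s*d" by (simp add: algebra_simps)
      then show ?thesis using s cd by simp
    qed
    have "(c - s*(c-d) + \<delta>)^2 = (c - s*(c-d))^2 + 2*\<delta>*(c - s*(c-d)) + \<delta>^2" by (simp add: power2_eq_square algebra_simps)
    then show ?thesis using 1 2 ex bt dl by (smt (verit) mult_nonneg_nonneg)
  qed
  have lo: "4*B \<le> (s*(c-d) + d + \<delta>)^2"
  proof -
    have "(s*(c-d) + d)^2 - 4* s*(1-s)*c*d = (s*c - (1-s)*d)^2" by (simp add: power2_eq_square algebra_simps)
    then have 1: "4* s*(1-s)*c*d \<le> (s*(c-d) + d)^2" by (metis diff_ge_0_iff_ge zero_le_power2)
    have 2: "s*(c-d) + d \<ge> 0"
    proof -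
      have "s*(c-d) + d = s*c + (1-s)*d" by (simp add: algebra_simps)
      then show ?thesis using s cd by simp
    qed
    have "(s*(c-d) + d + \<delta>)^2 = (s*(c-d) + d)^2 + 2*\<delta>*(s*(c-d) + d) + \<delta>^2" by (simp add: power2_eq_square algebra_simps)
    then show ?thesis using 1 2 ex bt dl by (smt (verit) mult_nonneg_nonneg)
  qed
  have tu: "t \<le> c - s*(c-d) + \<delta>"
  proof -
    have "\<bar>t\<bar> \<le> \<bar>c - s*(c-d) + \<delta>\<bar>" using t(1) up by (metis order.trans power2_le_iff_abs_le abs_ge_zero power2_abs)
    moreover have "c - s*(c-d) + \<delta> \<ge> 0"
    proof -
      have "c - s*(c-d) = (1-s)*c + s*d" by (simp add: algebra_simps)
      then show ?thesis using s cd dl by simp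
    qed
    ultimately show ?thesis by linarith
  qed
  have tl: "-t \<le> s*(c-d) + d + \<delta>"
  proof -
    have "\<bar>t\<bar> \<le> \<bar>s*(c-d) + d + \<delta>\<bar>" using t(1) lo by (metis order.trans power2_le_iff_abs_le abs_ge_zero power2_abs)
    moreover have "s*(c-d) + d + \<delta> \<ge> 0"
    proof -
      have "s*(c-d) + d = s*c + (1-s)*d" by (simp add: algebra_simps)
      then show ?thesis using s cd dl by simp
    qed
    ultimately show ?thesis by linarith
  qed
  have A: "cmod (x - of_real (s*(c-d) + t)) \<ge> \<delta>" using dl(2)[rule_format, of "s*(c-d) + t"] tu tl by linarith
  have eq: "x - of_real (s*(c-d) + t) = u + v - of_real t" using uv(2) by simp
  from A have "cmod (u + v - of_real t) \<ge> \<delta>" by (simp only: eq)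
  then show ?thesis using t(2) by (simp add: field_simps)
qed


lemma perturb:
  fixes u v u' v' X X' :: complex and B B' :: real
  assumes r: "u + v = X" "u * v = of_real B" "u' + v' = X'" "u' * v' = of_real B'"
    and g: "g > 0" "cmod u - cmod v \<ge> g" "cmod u' - cmod v' \<ge> g"
    and dX: "cmod (X - X') \<le> g/4"
    and e: "cmod (X - X') * cmod u' + \<bar>B - B'\<bar> \<le> \<epsilon>" "\<epsilon> \<le> g^2/8"
  shows "cmod (u - u') \<le> 2*\<epsilon>/g"
proof -
  have f: "(u' - u) * (u' - v) = (X' - X)*u' + of_real (B - B')"
  proof -
    have "(u' - u) * (u' - v) = u'^2 - X*u' + of_real B" proof -
      have "(u' - u) * (u' - v) = u'^2 - (u + v)*u' + u * v" by (simp add: algebra_simps power2_eq_square)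
      then show ?thesis using r(1,2) by simp
    qed
    moreover have "u'^2 - X'*u' + of_real B' = 0"
    proof -
      have "u'^2 - (u' + v')*u' + u' * v' = 0" by (simp add: algebra_simps power2_eq_square)
      then show ?thesis using r(3,4) by simp
    qed
    ultimately show ?thesis by (simp add: algebra_simps)
  qed
  define t where "t = cmod (u' - u)"
  define s where "s = cmod (u' - v)"
  have ts: "t * s \<le> \<epsilon>"
  proof -
    have "t * s = cmod ((X' - X)*u' + of_real (B - B'))" using f by (simp add: t_def s_def norm_mult[symmetric])
    also have "\<dots> \<le> cmod (X - X') * cmod u' + \<bar>B - B'\<bar>"
      using norm_triangle_ineq[of "(X'-X)*u'" "of_real (B-B')"] by (simp add: norm_mult norm_minus_commute flip: of_real_diff)
    finally show ?thesis using e by simp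
  qed
  have tps: "t + s \<ge> g"
  proof -
    have "cmod (u - v) \<le> t + s" unfolding t_def s_def
      using norm_triangle_ineq4[of "u'-v" "u'-u"] by simp
    moreover have "cmod u - cmod v \<le> cmod (u - v)" by (rule norm_triangle_ineq2)
    ultimately show ?thesis using g by linarith
  qed
  have t0: "t \<ge> 0" "s \<ge> 0" by (auto simp: t_def s_def)
  show ?thesis
  proof (cases "s \<ge> g/2")
    case True
    then have "t * (g/2) \<le> \<epsilon>" using ts t0 by (smt (verit) mult_left_mono)
    then show ?thesis using g by (simp add: t_def norm_minus_commute field_simps)
  next
    case False
    then have tg: "t \<ge> g/2" using tps by linarith
    then have "(g/2) * s \<le> \<epsilon>" using ts t0 by (smt (verit) mult_right_mono)
    then have "s \<le> 2*\<epsilon>/g" using g by (simp add: field_simps)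
    also have "\<dots> \<le> g/4" using e g by (simp add: field_simps power2_eq_square)
    finally have s4: "s \<le> g/4" .
    have 1: "cmod u' \<le> cmod v + s" unfolding s_def
      using norm_triangle_ineq[of v "u'-v"] by simp
    have "v' - u = (X' - X) - (u' - v)" using r(1,3) by (auto simp: algebra_simps)
    then have "cmod (v' - u) \<le> cmod (X - X') + s" unfolding s_def
      using norm_triangle_ineq4[of "X'-X" "u'-v"] by (simp add: norm_minus_commute)
    then have 2: "cmod u \<le> cmod v' + cmod (X - X') + s"
      using norm_triangle_ineq4[of v' "v'-u"] by simp
    show ?thesis using 1 2 g dX s4 by linarith
  qed
qed




lemma tracking:
  fixes X U V w :: "nat \<Rightarrow> complex" and B :: "nat \<Rightarrow> real"
  assumes rt: "\<And>n. U n + V n = X n" "\<And>n. U n * V n = of_real (B n)"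
    and gp: "\<And>n. cmod (U n) - cmod (V n) \<ge> g" "g > 0" and M: "\<And>n. cmod (U n) \<le> M"
    and D: "\<And>n. cmod (U n - U (Suc n)) \<le> \<Delta>" "\<Delta> \<ge> 0" "\<Delta> \<le> g/4" "(2*M/g)*\<Delta> \<le> g/4"
    and w0: "w 0 = U 0" and ws: "\<And>n. w (Suc n) = X (Suc n) - of_real (B (Suc n)) / w n"
  shows "cmod (w n - U n) \<le> (2*M/g)*\<Delta>"
proof (induction n)
  case 0
  have "M \<ge> 0" using M[of 0] norm_ge_zero[of "U 0"] by linarith
  then show ?case using w0 D gp by simp
next
  case (Suc n)
  define K where "K = 2*M/g"
  have Mg: "M \<ge> g" using gp(1)[of 0] M[of 0] norm_ge_zero[of "V 0"] by linarith
  have K0: "K \<ge> 0" using Mg gp by (simp add: K_def)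
  have IH: "cmod (w n - U n) \<le> K*\<Delta>" using Suc by (simp add: K_def)
  define E where "E = (K+1)*\<Delta>"
  have "K*\<Delta> \<le> g/4" using D(4) by (simp add: K_def)
  moreover have "E = K*\<Delta> + \<Delta>" by (simp add: E_def algebra_simps)
  ultimately have E2: "E \<le> g/2" using D(3) by linarith
  have E0: "E \<ge> 0" using K0 D by (simp add: E_def)
  let ?U = "U (Suc n)" and ?V = "V (Suc n)"
  have 1: "cmod (w n - ?U) \<le> E"
  proof -
    have "cmod (w n - ?U) \<le> cmod (w n - U n) + cmod (U n - ?U)"
      using norm_triangle_ineq[of "w n - U n" "U n - ?U"] by simp
    then show ?thesis using IH D(1)[of n] by (simp add: E_def algebra_simps)
  qed
  have 2: "cmod (w n) \<ge> cmod ?U - E"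
    using 1 norm_triangle_ineq2[of ?U "?U - w n"] by (simp add: norm_minus_commute)
  have Ug: "cmod ?U \<ge> g" using gp(1)[of "Suc n"] norm_ge_zero[of ?V] by linarith
  have wpos: "cmod (w n) > 0" using 2 Ug E2 gp by linarith
  then have wnz: "w n \<noteq> 0" by auto
  have eq: "w (Suc n) - ?U = ?V * (w n - ?U) / w n"
  proof -
    have "w (Suc n) - ?U = ?U + ?V - ?U * ?V / w n - ?U" using ws[of n] rt[of "Suc n"] by simp
    also have "\<dots> = ?V * (w n - ?U) / w n" using wnz by (simp add: field_simps)
    finally show ?thesis .
  qed
  have "cmod (w (Suc n) - ?U) = cmod ?V * cmod (w n - ?U) / cmod (w n)"
    by (simp add: eq norm_mult norm_divide)
  also have "\<dots> \<le> (cmod ?U - g) * E / (cmod ?U - E)"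
  proof -
    have a: "cmod ?V \<le> cmod ?U - g" using gp(1)[of "Suc n"] by linarith
    have "cmod ?V * cmod (w n - ?U) \<le> (cmod ?U - g) * E"
      using a 1 Ug by (intro mult_mono) auto
    moreover have "cmod ?U - E > 0" using Ug E2 gp by linarith
    moreover have "(cmod ?U - g) * E \<ge> 0" using Ug E0 by simp
    ultimately show ?thesis using 2 frac_le by blast
  qed
  also have "\<dots> \<le> K * \<Delta>"
  proof -
    have pos: "cmod ?U - E > 0" using Ug E2 gp by linarith
    have "(cmod ?U - g) * E \<le> K * \<Delta> * (cmod ?U - E)"
    proof -
      have KD: "K*\<Delta> = E - \<Delta>" by (simp add: E_def algebra_simps)
      have "E * E \<le> E * (g/2)" using E2 E0 by (intro mult_left_mono) auto
      also have "E * (g/2) = M*\<Delta> + g*\<Delta>/2" using gp by (simp add: E_def K_def field_simps)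
      finally have EE: "E*E \<le> M*\<Delta> + g*\<Delta>/2" .
      have "\<Delta> * cmod ?U \<le> \<Delta> * M" using M D by (intro mult_left_mono) auto
      moreover have "g * E = 2*M*\<Delta> + g*\<Delta>" using gp by (simp add: E_def K_def field_simps)
      moreover have "\<Delta> * E \<ge> 0" using D E0 by simp
      moreover have "g * \<Delta> \<ge> 0" using D gp by simp
      ultimately have "\<Delta> * cmod ?U + E*E \<le> g*E + \<Delta>*E" using EE by (simp add: algebra_simps)
      then show ?thesis unfolding KD by (simp add: algebra_simps)
    qed
    then show ?thesis using pos by (simp add: divide_le_eq)
  qed
  finally show ?case by (simp add: K_def)
qed



definition XX :: "real \<Rightarrow> real \<Rightarrow> complex \<Rightarrow> real \<Rightarrow> nat \<Rightarrow> complex" where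
  "XX c d x q n = x - of_real (q^n * (c - d))"
definition BB :: "real \<Rightarrow> real \<Rightarrow> real \<Rightarrow> nat \<Rightarrow> real" where
  "BB c d q n = q^n * (1 - q^n) * c * d / q"
definition UU :: "real \<Rightarrow> real \<Rightarrow> complex \<Rightarrow> real \<Rightarrow> nat \<Rightarrow> complex" where
  "UU c d x q n = bigroot (XX c d x q n) (of_real (BB c d q n))"
definition VV :: "real \<Rightarrow> real \<Rightarrow> complex \<Rightarrow> real \<Rightarrow> nat \<Rightarrow> complex" where
  "VV c d x q n = XX c d x q n - UU c d x q n"
fun ww :: "real \<Rightarrow> real \<Rightarrow> complex \<Rightarrow> real \<Rightarrow> nat \<Rightarrow> complex" where
  "ww c d x q 0 = XX c d x q 0"
| "ww c d x q (Suc n) = XX c d x q (Suc n) - of_real (BB c d q (Suc n)) / ww c d x q n"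

lemma Ppair_Suc': "Ppair c d q x (Suc n) = (snd (Ppair c d q x n),
     (x - of_real (q ^ Suc n * (c - d))) * snd (Ppair c d q x n)
           - of_real (q ^ n * c * d * (1 - q ^ Suc n)) * fst (Ppair c d q x n))"
  by (cases "Ppair c d q x n") (simp only: Ppair.simps Let_def prod.case fst_conv snd_conv)

lemma Ppair_fst_Suc: "fst (Ppair c d q x (Suc n)) = snd (Ppair c d q x n)"
  by (simp only: Ppair_Suc' fst_conv)

lemma Phat_0: "Phat c d q x 0 = 1" by (simp add: Phat_def)
lemma Phat_1: "Phat c d q x (Suc 0) = XX c d x q 0" by (simp add: Phat_def XX_def)
lemma Phat_SS:
  assumes "q > 0"
  shows "Phat c d q x (Suc (Suc n)) = XX c d x q (Suc n) * Phat c d q x (Suc n) - of_real (BB c d q (Suc n)) * Phat c d q x n"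
proof -
  have "Phat c d q x (Suc (Suc n)) = snd (Ppair c d q x (Suc n))" by (simp only: Phat_def Ppair_fst_Suc)
  also have "\<dots> = (x - of_real (q ^ Suc n * (c - d))) * snd (Ppair c d q x n)
           - of_real (q ^ n * c * d * (1 - q ^ Suc n)) * fst (Ppair c d q x n)"
    by (simp only: Ppair_Suc' snd_conv)
  also have "snd (Ppair c d q x n) = Phat c d q x (Suc n)" by (simp only: Phat_def Ppair_fst_Suc)
  also have "fst (Ppair c d q x n) = Phat c d q x n" by (simp add: Phat_def)
  also have "q ^ n * c * d * (1 - q ^ Suc n) = BB c d q (Suc n)" using assms by (simp add: BB_def field_simps)
  finally show ?thesis by (simp add: XX_def)
qed

lemma ww_Phat:
  assumes q: "q > 0" and nz: "\<And>n. ww c d x q n \<noteq> 0"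
  shows "Phat c d q x (Suc n) = ww c d x q n * Phat c d q x n"
proof (induction n)
  case 0
  then show ?case by (simp add: Phat_0 Phat_1)
next
  case (Suc n)
  have "Phat c d q x (Suc (Suc n)) = XX c d x q (Suc n) * (ww c d x q n * Phat c d q x n) - of_real (BB c d q (Suc n)) * Phat c d q x n"
    using Phat_SS[OF q] Suc by simp
  also have "\<dots> = ww c d x q (Suc n) * (ww c d x q n * Phat c d q x n)"
    using nz[of n] by (simp add: field_simps)
  finally show ?case using Suc by simp
qed

lemma Phat_nz:
  assumes q: "q > 0" and nz: "\<And>n. ww c d x q n \<noteq> 0"
  shows "Phat c d q x n \<noteq> 0"
  using nz by (induction n) (auto simp: Phat_0 ww_Phat[OF q nz])

lemma big_bound:
  fixes u v X :: complex
  assumes "u + v = X" "u * v = of_real B" "cmod u \<ge> g" "g > 0" "B \<ge> 0"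
  shows "cmod u \<le> cmod X + B/g"
proof -
  have "cmod u * cmod v = B" using assms(2,5) by (metis norm_mult norm_of_real abs_of_nonneg)
  moreover have "cmod u > 0" using assms(3,4) by linarith
  ultimately have "cmod v = B / cmod u" by (simp add: field_simps)
  also have "\<dots> \<le> B / g" using assms(3,4,5) by (simp add: frac_le)
  finally have "cmod v \<le> B/g" .
  moreover have "cmod u \<le> cmod X + cmod v" using assms(1) norm_triangle_ineq4[of X v]
    by (metis add_diff_cancel_right')
  ultimately show ?thesis by linarith
qed



definition epsq :: "real \<Rightarrow> real \<Rightarrow> real \<Rightarrow> real \<Rightarrow> real" where
  "epsq c d M q = (1 - q) * (\<bar>c - d\<bar> * M + c * d / q)"

lemma track_q:
  fixes x :: complex
  assumes cd: "c > 0" "d > 0" and r: "0 < r"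
    and dl: "\<delta> > 0" "\<forall>y::real. -d - \<delta> \<le> y \<and> y \<le> c + \<delta> \<longrightarrow> cmod (x - of_real y) \<ge> \<delta>"
    and g: "g = \<delta>/2" and M: "M = cmod x + \<bar>c - d\<bar> + c*d/(r*g)"
    and q: "r \<le> q" "q < 1" "(1/q - 1)*c*d \<le> \<delta>^2" "\<bar>c - d\<bar>*(1 - q) \<le> g/4"
       "epsq c d M q \<le> g^2/8" "2*epsq c d M q/g \<le> g/4" "(2*M/g)*(2*epsq c d M q/g) \<le> g/4"
  shows "cmod (ww c d x q n - UU c d x q n) \<le> (2*M/g)*(2*epsq c d M q/g)"
    and "cmod (UU c d x q n) - cmod (VV c d x q n) \<ge> g"
    and "cmod (UU c d x q n) \<le> M"
    and "ww c d x q n \<noteq> 0"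
proof -
  have q0: "q > 0" using r q by linarith
  have g0: "g > 0" using g dl by simp
  have rt: "\<And>n. UU c d x q n + VV c d x q n = XX c d x q n"
           "\<And>n. UU c d x q n * VV c d x q n = of_real (BB c d q n)"
    by (simp_all add: VV_def UU_def bigroot_prod)
  have sn: "\<And>n. 0 \<le> q^n" "\<And>n. q^n \<le> 1" using q0 q by (auto simp: power_le_one)
  have gp: "\<And>n. cmod (UU c d x q n) - cmod (VV c d x q n) \<ge> g"
  proof -
    fix n
    have "cmod (UU c d x q n) - cmod (VV c d x q n) \<ge> \<delta>/2"
    proof (rule gap_lemma[OF dl cd sn(1)[of n] sn(2)[of n], of "1/q"])
      show "1 \<le> 1/q" using q q0 by simp
      show "(1/q - 1)*c*d \<le> \<delta>^2" using q by simp
      show "UU c d x q n * VV c d x q n = of_real (1/q * q^n * (1 - q^n) * c * d)"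
        using rt(2)[of n] by (simp add: BB_def)
      show "UU c d x q n + VV c d x q n = x - of_real (q^n * (c - d))"
        using rt(1)[of n] by (simp add: XX_def)
      show "cmod (VV c d x q n) \<le> cmod (UU c d x q n)" by (simp add: VV_def UU_def bigroot_le)
    qed
    then show "cmod (UU c d x q n) - cmod (VV c d x q n) \<ge> g" using g by simp
  qed
  have Bn: "\<And>n. 0 \<le> BB c d q n" "\<And>n. BB c d q n \<le> c*d/r"
  proof -
    fix n
    have a: "0 \<le> q^n * (1 - q^n)" using sn[of n] by simp
    have b: "q^n * (1 - q^n) \<le> 1" using sn[of n] by (simp add: mult_le_one)
    show "0 \<le> BB c d q n" using a cd q0 by (simp add: BB_def)
    have "BB c d q n = (q^n * (1 - q^n)) * (c*d/q)" by (simp add: BB_def)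
    also have "\<dots> \<le> 1 * (c*d/q)" using a b cd q0 by (intro mult_right_mono) auto
    also have "\<dots> \<le> c*d/r" using cd q r by (simp add: frac_le)
    finally show "BB c d q n \<le> c*d/r" .
  qed
  have Xn: "\<And>n. cmod (XX c d x q n) \<le> cmod x + \<bar>c - d\<bar>"
  proof -
    fix n
    have "cmod (XX c d x q n) \<le> cmod x + cmod (of_real (q^n * (c - d)) :: complex)"
      unfolding XX_def by (rule norm_triangle_ineq4)
    also have "cmod (of_real (q^n * (c - d)) :: complex) = \<bar>q^n * (c - d)\<bar>" by (rule norm_of_real)
    also have "\<dots> = q^n * \<bar>c - d\<bar>" using sn[of n] by (simp add: abs_mult)
    also have "\<dots> \<le> \<bar>c - d\<bar>" using sn[of n] by (simp add: mult_left_le_one_le)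
    finally show "cmod (XX c d x q n) \<le> cmod x + \<bar>c - d\<bar>" by simp
  qed
  have Mb: "\<And>n. cmod (UU c d x q n) \<le> M"
  proof -
    fix n
    have Ug: "cmod (UU c d x q n) \<ge> g" using gp[of n] norm_ge_zero[of "VV c d x q n"] by linarith
    have "cmod (UU c d x q n) \<le> cmod (XX c d x q n) + BB c d q n / g"
      by (rule big_bound[OF rt(1) rt(2) Ug g0 Bn(1)])
    also have "BB c d q n / g \<le> (c*d/r) / g" using Bn(2)[of n] g0 by (intro divide_right_mono) auto
    finally show "cmod (UU c d x q n) \<le> M" using Xn[of n] M by (simp add: field_simps)
  qed
  have Dn: "\<And>n. cmod (UU c d x q n - UU c d x q (Suc n)) \<le> 2*epsq c d M q/g"
  proof -
    fix n
    have dX: "XX c d x q (Suc n) - XX c d x q n = of_real ((q^n - q^Suc n) * (c - d))"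
      by (simp add: XX_def algebra_simps)
    have qd: "q^n - q^Suc n = q^n * (1 - q)" by (simp add: algebra_simps)
    have qd1: "0 \<le> q^n - q^Suc n" "q^n - q^Suc n \<le> 1 - q"
      using qd sn[of n] q by (auto simp: mult_left_le_one_le)
    have cX: "cmod (XX c d x q (Suc n) - XX c d x q n) \<le> \<bar>c - d\<bar> * (1 - q)"
    proof -
      have "cmod (of_real ((q^n - q^Suc n) * (c - d)) :: complex) = \<bar>(q^n - q^Suc n) * (c - d)\<bar>" by (rule norm_of_real)
      also have "\<dots> = (q^n - q^Suc n) * \<bar>c - d\<bar>" using qd1 by (simp add: abs_mult)
      also have "\<dots> \<le> (1 - q) * \<bar>c - d\<bar>" using qd1 by (intro mult_right_mono) auto
      finally show ?thesis unfolding dX by (simp add: mult.commute)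
    qed
    have dB: "BB c d q (Suc n) - BB c d q n = (c*d/q) * ((q^Suc n - q^n) * (1 - q^Suc n - q^n))"
    proof -
      have e: "\<And>m. BB c d q m = (c*d/q) * (q^m*(1-q^m))" by (simp add: BB_def)
      show ?thesis unfolding e right_diff_distrib[symmetric]
        by (rule arg_cong[where f = "\<lambda>t. (c*d/q)*t"]) (simp add: algebra_simps)
    qed
    have "\<bar>1 - q^Suc n - q^n\<bar> \<le> 1" using sn[of n] sn[of "Suc n"] by linarith
    moreover have "\<bar>q^Suc n - q^n\<bar> \<le> 1 - q" using qd1 by linarith
    ultimately have "\<bar>(q^Suc n - q^n) * (1 - q^Suc n - q^n)\<bar> \<le> (1 - q) * 1"
      unfolding abs_mult by (intro mult_mono) auto
    then have P: "\<bar>(q^Suc n - q^n) * (1 - q^Suc n - q^n)\<bar> \<le> 1 - q" by simp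
    have cdq: "\<bar>c*d/q\<bar> = c*d/q" "c*d/q \<ge> 0" using cd q0 by auto
    have cB: "\<bar>BB c d q (Suc n) - BB c d q n\<bar> \<le> (c*d/q) * (1 - q)"
      unfolding dB abs_mult[of "c*d/q"] cdq(1) by (rule mult_left_mono[OF P cdq(2)])
    have "cmod (XX c d x q (Suc n) - XX c d x q n) * cmod (UU c d x q n) \<le> (\<bar>c - d\<bar> * (1 - q)) * M"
      using cX Mb[of n] q by (intro mult_mono) auto
    then have e: "cmod (XX c d x q (Suc n) - XX c d x q n) * cmod (UU c d x q n)
        + \<bar>BB c d q (Suc n) - BB c d q n\<bar> \<le> epsq c d M q"
      using cB by (simp add: epsq_def algebra_simps)
    have "cmod (UU c d x q (Suc n) - UU c d x q n) \<le> 2*epsq c d M q/g"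
      by (rule perturb[OF rt(1) rt(2) rt(1) rt(2) g0 gp gp _ e q(5)]) (use cX q(4) in linarith)
    then show "cmod (UU c d x q n - UU c d x q (Suc n)) \<le> 2*epsq c d M q/g"
      by (simp add: norm_minus_commute)
  qed
  have w0: "ww c d x q 0 = UU c d x q 0"
  proof -
    have "BB c d q 0 = 0" by (simp add: BB_def)
    then have "UU c d x q 0 * VV c d x q 0 = 0" using rt(2)[of 0] by simp
    moreover have "cmod (VV c d x q 0) \<le> cmod (UU c d x q 0)" by (simp add: VV_def UU_def bigroot_le)
    ultimately have "VV c d x q 0 = 0" by auto
    then show ?thesis using rt(1)[of 0] by simp
  qed
  have ep0: "epsq c d M q \<ge> 0"
  proof -
    have "M \<ge> 0" using Mb[of 0] norm_ge_zero[of "UU c d x q 0"] by linarith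
    then show ?thesis using q cd q0 by (simp add: epsq_def)
  qed
  have tr: "\<And>n. cmod (ww c d x q n - UU c d x q n) \<le> (2*M/g)*(2*epsq c d M q/g)"
  proof -
    have D0: "0 \<le> 2*epsq c d M q/g" using ep0 g0 by simp
    fix n show "cmod (ww c d x q n - UU c d x q n) \<le> (2*M/g)*(2*epsq c d M q/g)"
      by (rule tracking[where U = "UU c d x q" and V = "VV c d x q" and X = "XX c d x q" and B = "BB c d q" and w = "ww c d x q", OF rt(1) rt(2) gp g0 Mb Dn D0 q(6) q(7) w0]) simp
  qed
  show "cmod (ww c d x q n - UU c d x q n) \<le> (2*M/g)*(2*epsq c d M q/g)" by (rule tr)
  show "cmod (UU c d x q n) - cmod (VV c d x q n) \<ge> g" by (rule gp)
  show "cmod (UU c d x q n) \<le> M" by (rule Mb)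
  have "cmod (UU c d x q n) \<ge> g" using gp[of n] norm_ge_zero[of "VV c d x q n"] by linarith
  moreover have "cmod (UU c d x q n) - cmod (ww c d x q n) \<le> cmod (ww c d x q n - UU c d x q n)"
    using norm_triangle_ineq2[of "UU c d x q n" "ww c d x q n"] by (simp add: norm_minus_commute)
  ultimately show "ww c d x q n \<noteq> 0" using tr[of n] q(7) g0 by auto
qed



lemma delta_exists:
  fixes x :: complex
  assumes x: "x \<notin> complex_of_real ` {-d..c}" and cd: "-d \<le> c"
  shows "\<exists>\<delta>>0. \<forall>y::real. -d - \<delta> \<le> y \<and> y \<le> c + \<delta> \<longrightarrow> cmod (x - of_real y) \<ge> \<delta>"
proof -
  have "compact (complex_of_real ` {-d..c})"
    by (intro compact_continuous_image continuous_on_of_real_id compact_Icc)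
  then have "closed (complex_of_real ` {-d..c})" by (rule compact_imp_closed)
  then obtain e where e: "e > 0" "\<forall>z\<in>complex_of_real ` {-d..c}. e \<le> dist x z"
    using separate_point_closed[OF \<open>closed (complex_of_real ` {-d..c})\<close> x] by auto
  show ?thesis
  proof (intro exI[of _ "e/2"] conjI allI impI)
    show "e/2 > 0" using e by simp
    fix y :: real assume y: "-d - e/2 \<le> y \<and> y \<le> c + e/2"
    define y' where "y' = max (-d) (min c y)"
    have y'1: "y' \<in> {-d..c}" using cd by (simp add: y'_def max_def min_def)
    have y'2: "\<bar>y - y'\<bar> \<le> e/2" using y cd e by (simp add: y'_def max_def min_def)
    have "complex_of_real y' \<in> complex_of_real ` {-d..c}" using y'1 by (rule imageI)
    then have "e \<le> dist x (of_real y')" using e(2) by blast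
    then have "e \<le> cmod (x - of_real y')" by (simp add: dist_norm)
    also have "\<dots> \<le> cmod (x - of_real y) + cmod (of_real y - of_real y' :: complex)"
      using norm_triangle_ineq[of "x - of_real y" "of_real y - of_real y'"] by simp
    also have "cmod (of_real y - of_real y' :: complex) = \<bar>y - y'\<bar>"
      by (simp only: of_real_diff[symmetric] norm_of_real)
    finally show "e/2 \<le> cmod (x - of_real y)" using y'2 by linarith
  qed
qed


lemma q_lim: "0 < r \<Longrightarrow> ((\<lambda>p::nat. r powr (1 / real p)) \<longlongrightarrow> 1) sequentially"
  using tendsto_powr[OF tendsto_const lim_inverse_n', of r] by simp

lemma q_bounds:
  assumes "0 < r" "r < 1" "p > 0"
  shows "r \<le> r powr (1 / real p)" "r powr (1 / real p) < 1"
proof -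
  have "1 / real p \<le> 1" using assms by simp
  then have "r powr 1 \<le> r powr (1 / real p)" using assms by (intro powr_mono') auto
  then show "r \<le> r powr (1 / real p)" using assms by simp
  have "r powr (1 / real p) = exp (1 / real p * ln r)" using assms by (simp add: powr_def)
  moreover have "1 / real p * ln r < 0" using assms by (simp add: divide_neg_pos)
  ultimately show "r powr (1 / real p) < 1" by simp
qed

lemma qpow_lim:
  assumes "0 < r"
  shows "((\<lambda>p::nat. (r powr (1 / real p)) ^ nat (int p + j)) \<longlongrightarrow> r) sequentially"
proof -
  have ev: "eventually (\<lambda>p::nat. r powr (1 + real_of_int j / real p) = (r powr (1 / real p)) ^ nat (int p + j)) sequentially"
    using eventually_ge_at_top[of "nat \<bar>j\<bar> + 1"]
  proof eventually_elim
    case (elim p)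
    then have p0: "p > 0" by simp
    have "int p + j \<ge> 0" using elim by linarith
    then have "real (nat (int p + j)) = real p + real_of_int j" by linarith
    then have "real (nat (int p + j)) * (1 / real p) = 1 + real_of_int j / real p"
      using p0 by (simp add: field_simps)
    then show ?case using assms powr_power[of r "1 / real p" "nat (int p + j)"] by simp
  qed
  have "((\<lambda>p::nat. r powr (1 + real_of_int j / real p)) \<longlongrightarrow> r powr (1 + 0)) sequentially"
    by (intro tendsto_powr tendsto_intros) (use assms in auto)
  then show ?thesis using Lim_transform_eventually[OF _ ev] assms by simp
qed



lemma main_lim:
  fixes x :: complex and j :: int
  assumes cd: "c > 0" "d > 0" and r: "0 < r" "r < 1"
    and dl: "\<delta> > 0" "\<forall>y::real. -d - \<delta> \<le> y \<and> y \<le> c + \<delta> \<longrightarrow> cmod (x - of_real y) \<ge> \<delta>"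
    and g: "g = \<delta>/2" and M: "M = cmod x + \<bar>c - d\<bar> + c*d/(r*g)"
    and q: "q = (\<lambda>p::nat. r powr (1 / real p))"
  shows "eventually (\<lambda>p. q p > 0 \<and> (\<forall>n. ww c d x (q p) n \<noteq> 0)) sequentially"
    and "((\<lambda>p. ww c d x (q p) (nat (int p + j))) \<longlongrightarrow> bigroot (x - of_real (r*(c-d))) (of_real (r*c*d*(1-r)))) sequentially"
    and "cmod (bigroot (x - of_real (r*(c-d))) (of_real (r*c*d*(1-r)))) - cmod ((x - of_real (r*(c-d))) - bigroot (x - of_real (r*(c-d))) (of_real (r*c*d*(1-r)))) \<ge> g"
proof -
  have g0: "g > 0" using g dl by simp
  have q1: "(q \<longlongrightarrow> 1) sequentially" unfolding q by (rule q_lim[OF r(1)])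
  have evq: "eventually (\<lambda>p. r \<le> q p \<and> q p < 1) sequentially"
    using eventually_gt_at_top[of "0::nat"] by eventually_elim (use q_bounds r q in auto)
  have L1: "((\<lambda>p. (1 / q p - 1)*c*d) \<longlongrightarrow> (1/1 - 1)*c*d) sequentially"
    by (intro tendsto_intros q1) simp
  have L2: "((\<lambda>p. \<bar>c - d\<bar>*(1 - q p)) \<longlongrightarrow> \<bar>c - d\<bar>*(1 - 1)) sequentially"
    by (intro tendsto_intros q1)
  have L3: "((\<lambda>p. epsq c d M (q p)) \<longlongrightarrow> (1 - 1) * (\<bar>c - d\<bar> * M + c * d / 1)) sequentially"
    unfolding epsq_def by (intro tendsto_intros q1) simp
  have L4: "((\<lambda>p. 2*epsq c d M (q p)/g) \<longlongrightarrow> 2*0/g) sequentially"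
    using L3 g0 by (intro tendsto_intros) simp_all
  have L5: "((\<lambda>p. (2*M/g)*(2*epsq c d M (q p)/g)) \<longlongrightarrow> (2*M/g)*(2*0/g)) sequentially"
    using L4 g0 by (intro tendsto_intros) simp_all
  have evgood: "eventually (\<lambda>p. r \<le> q p \<and> q p < 1 \<and> (1/q p - 1)*c*d \<le> \<delta>^2 \<and> \<bar>c - d\<bar>*(1 - q p) \<le> g/4
       \<and> epsq c d M (q p) \<le> g^2/8 \<and> 2*epsq c d M (q p)/g \<le> g/4 \<and> (2*M/g)*(2*epsq c d M (q p)/g) \<le> g/4) sequentially"
  proof -
    have E1: "eventually (\<lambda>p. (1/q p - 1)*c*d < \<delta>^2) sequentially" by (rule order_tendstoD(2)[OF L1]) (use dl in simp)
    have E2: "eventually (\<lambda>p. \<bar>c - d\<bar>*(1 - q p) < g/4) sequentially" by (rule order_tendstoD(2)[OF L2]) (use g0 in simp)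
    have E3: "eventually (\<lambda>p. epsq c d M (q p) < g^2/8) sequentially" by (rule order_tendstoD(2)[OF L3]) (use g0 in simp)
    have E4: "eventually (\<lambda>p. 2*epsq c d M (q p)/g < g/4) sequentially" by (rule order_tendstoD(2)[OF L4]) (use g0 in simp)
    have E5: "eventually (\<lambda>p. (2*M/g)*(2*epsq c d M (q p)/g) < g/4) sequentially" by (rule order_tendstoD(2)[OF L5]) (use g0 in simp)
    show ?thesis using evq E1 E2 E3 E4 E5 by eventually_elim auto
  qed
  have evtr: "eventually (\<lambda>p. q p > 0 \<and> (\<forall>n. cmod (ww c d x (q p) n - UU c d x (q p) n) \<le> (2*M/g)*(2*epsq c d M (q p)/g)
       \<and> cmod (UU c d x (q p) n) - cmod (VV c d x (q p) n) \<ge> g \<and> cmod (UU c d x (q p) n) \<le> M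
       \<and> ww c d x (q p) n \<noteq> 0)) sequentially"
    using evgood
  proof eventually_elim
    case (elim p)
    then have "q p > 0" using r by linarith
    then show ?case using track_q[OF cd r(1) dl g M, of "q p"] elim by blast
  qed
  then show "eventually (\<lambda>p. q p > 0 \<and> (\<forall>n. ww c d x (q p) n \<noteq> 0)) sequentially"
    by (rule eventually_mono) blast
  define Xi where "Xi = x - of_real (r*(c-d))"
  define Bi where "Bi = r*c*d*(1-r)"
  define Ui where "Ui = bigroot Xi (of_real Bi)"
  define Vi where "Vi = Xi - Ui"
  have rti: "Ui + Vi = Xi" "Ui * Vi = of_real Bi" by (simp_all add: Vi_def Ui_def bigroot_prod)
  have gpi: "cmod Ui - cmod Vi \<ge> g"
  proof -
    have "cmod Ui - cmod Vi \<ge> \<delta>/2"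
    proof (rule gap_lemma[OF dl cd, of r 1])
      show "Ui * Vi = of_real (1 * r * (1 - r) * c * d)" using rti by (simp add: Bi_def algebra_simps)
      show "Ui + Vi = x - of_real (r * (c - d))" using rti by (simp add: Xi_def)
      show "cmod Vi \<le> cmod Ui" by (simp add: Vi_def Ui_def bigroot_le)
    qed (use r in auto)
    then show ?thesis using g by simp
  qed
  then show "cmod (bigroot (x - of_real (r*(c-d))) (of_real (r*c*d*(1-r)))) - cmod ((x - of_real (r*(c-d))) - bigroot (x - of_real (r*(c-d))) (of_real (r*c*d*(1-r)))) \<ge> g"
    by (simp add: Ui_def Vi_def Xi_def Bi_def)
  define n where "n = (\<lambda>p::nat. nat (int p + j))"
  have qn: "((\<lambda>p. q p ^ n p) \<longlongrightarrow> r) sequentially" unfolding q n_def by (rule qpow_lim[OF r(1)])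
  have LX: "((\<lambda>p. XX c d x (q p) (n p)) \<longlongrightarrow> Xi) sequentially"
    unfolding XX_def Xi_def by (intro tendsto_intros qn)
  have LB: "((\<lambda>p. BB c d (q p) (n p)) \<longlongrightarrow> r * (1 - r) * c * d / 1) sequentially"
    unfolding BB_def by (intro tendsto_intros qn q1) simp
  have LB': "((\<lambda>p. BB c d (q p) (n p)) \<longlongrightarrow> Bi) sequentially"
    using LB by (simp add: Bi_def algebra_simps)
  define ep where "ep = (\<lambda>p. cmod (Xi - XX c d x (q p) (n p)) * M + \<bar>Bi - BB c d (q p) (n p)\<bar>)"
  have Lep: "(ep \<longlongrightarrow> cmod (Xi - Xi) * M + \<bar>Bi - Bi\<bar>) sequentially"
    unfolding ep_def by (intro tendsto_intros LX LB')
  have Lep0: "(ep \<longlongrightarrow> 0) sequentially" using Lep by simp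
  have LXd: "((\<lambda>p. cmod (Xi - XX c d x (q p) (n p))) \<longlongrightarrow> cmod (Xi - Xi)) sequentially"
    by (intro tendsto_intros LX)
  have evU: "eventually (\<lambda>p. cmod (Ui - UU c d x (q p) (n p)) \<le> 2 * ep p / g) sequentially"
  proof -
    have E1: "eventually (\<lambda>p. cmod (Xi - XX c d x (q p) (n p)) < g/4) sequentially" by (rule order_tendstoD(2)[OF LXd]) (use g0 in simp)
    have E2: "eventually (\<lambda>p. ep p < g^2/8) sequentially" by (rule order_tendstoD(2)[OF Lep0]) (use g0 in simp)
    show ?thesis using evtr E1 E2
  proof eventually_elim
    case (elim p)
    let ?u = "UU c d x (q p) (n p)" and ?v = "VV c d x (q p) (n p)"
    have rt: "?u + ?v = XX c d x (q p) (n p)" "?u * ?v = of_real (BB c d (q p) (n p))"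
      by (simp_all add: VV_def UU_def bigroot_prod)
    have "cmod (Xi - XX c d x (q p) (n p)) * cmod ?u \<le> cmod (Xi - XX c d x (q p) (n p)) * M"
      using elim by (intro mult_left_mono) auto
    then have e: "cmod (Xi - XX c d x (q p) (n p)) * cmod ?u + \<bar>Bi - BB c d (q p) (n p)\<bar> \<le> ep p"
      by (simp add: ep_def)
    show ?case
      by (rule perturb[OF rti rt g0 gpi _ _ e]) (use elim in auto)
  qed
  qed
  have LU: "((\<lambda>p. UU c d x (q p) (n p)) \<longlongrightarrow> Ui) sequentially"
  proof -
    have "((\<lambda>p. 2 * ep p / g) \<longlongrightarrow> 2 * 0 / g) sequentially" by (intro tendsto_intros Lep0) (use g0 in simp)
    then have "((\<lambda>p. Ui - UU c d x (q p) (n p)) \<longlongrightarrow> 0) sequentially"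
      using Lim_null_comparison[OF evU] by simp
    then have "((\<lambda>p. Ui - (Ui - UU c d x (q p) (n p))) \<longlongrightarrow> Ui - 0) sequentially"
      by (intro tendsto_intros)
    then show ?thesis by simp
  qed
  have LW: "((\<lambda>p. ww c d x (q p) (n p) - UU c d x (q p) (n p)) \<longlongrightarrow> 0) sequentially"
  proof (rule Lim_null_comparison)
    show "eventually (\<lambda>p. cmod (ww c d x (q p) (n p) - UU c d x (q p) (n p)) \<le> (2*M/g)*(2*epsq c d M (q p)/g)) sequentially"
      using evtr by (rule eventually_mono) blast
    show "((\<lambda>p. (2*M/g)*(2*epsq c d M (q p)/g)) \<longlongrightarrow> 0) sequentially" using L5 by simp
  qed
  have "((\<lambda>p. (ww c d x (q p) (n p) - UU c d x (q p) (n p)) + UU c d x (q p) (n p)) \<longlongrightarrow> 0 + Ui) sequentially"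
    by (intro tendsto_intros LW LU)
  then show "((\<lambda>p. ww c d x (q p) (nat (int p + j))) \<longlongrightarrow> bigroot (x - of_real (r*(c-d))) (of_real (r*c*d*(1-r)))) sequentially"
    by (simp add: n_def Ui_def Xi_def Bi_def)
qed



lemma Phat_prod:
  assumes q: "q > 0" and nz: "\<And>n. ww c d x q n \<noteq> 0"
  shows "Phat c d q x (n + k) = (\<Prod>i<k. ww c d x q (n + i)) * Phat c d q x n"
proof (induction k)
  case 0
  then show ?case by simp
next
  case (Suc k)
  have "Phat c d q x (n + Suc k) = ww c d x q (n + k) * Phat c d q x (n + k)"
    using ww_Phat[OF q nz, of "n + k"] by simp
  then show ?case using Suc by (simp add: mult.commute mult.left_commute)
qed

lemma rho_eq:
  fixes U V X :: complex
  assumes rt: "U + V = X" "U * V = of_real B" and B: "B > 0" and gp: "cmod U - cmod V > 0"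
  shows "rho (X / of_real (2 * sqrt B)) = U / of_real (sqrt B)"
proof -
  define \<beta> where "\<beta> = sqrt B"
  have b0: "\<beta> > 0" using B by (simp add: \<beta>_def)
  have bb: "\<beta> * \<beta> = B" using B by (simp add: \<beta>_def)
  define y where "y = X / of_real (2 * \<beta>)"
  define w where "w = U / of_real \<beta>"
  define w' where "w' = V / of_real \<beta>"
  have sum: "w + w' = 2 * y" using rt b0 by (simp add: w_def w'_def y_def field_simps)
  have prod: "w * w' = 1"
  proof -
    have "w * w' = (U * V) / (of_real \<beta> * of_real \<beta>)" by (simp add: w_def w'_def)
    also have "\<dots> = 1" using rt(2) bb b0 B by (simp flip: of_real_mult)
    finally show ?thesis .
  qed
  have cw: "cmod w > cmod w'" using gp b0 by (simp add: w_def w'_def norm_divide divide_strict_right_mono)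
  have ab: "cmod w * cmod w' = 1" using prod by (metis norm_mult norm_one)
  have cw1: "cmod w > 1"
  proof (rule ccontr)
    assume "\<not> cmod w > 1"
    then have "cmod w * cmod w' \<le> cmod w'" using mult_left_le_one_le[of "cmod w'" "cmod w"] by simp
    then show False using ab cw \<open>\<not> cmod w > 1\<close> by linarith
  qed
  have cw'1: "cmod w' < 1"
  proof -
    have "cmod w \<noteq> 0" using cw1 by linarith
    then have "cmod w' = 1 / cmod w" using ab by (simp add: eq_divide_eq mult.commute)
    then show ?thesis using cw1 by (simp add: divide_less_eq)
  qed
  have "rho y = w"
    unfolding rho_def
  proof (rule the_equality)
    show "\<exists>s. s\<^sup>2 = y\<^sup>2 - 1 \<and> w = y + s \<and> 1 < cmod w"
    proof (intro exI conjI)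
      have "y = (w + w')/2" using sum by simp
      then show "(w - y)\<^sup>2 = y\<^sup>2 - 1" using prod by (simp add: power2_eq_square field_simps)
    qed (use cw1 in auto)
    fix z assume "\<exists>s. s\<^sup>2 = y\<^sup>2 - 1 \<and> z = y + s \<and> 1 < cmod z"
    then obtain s where s: "s\<^sup>2 = y\<^sup>2 - 1" "z = y + s" "1 < cmod z" by blast
    have "(z - w) * (z - w') = z^2 - (w + w') * z + w * w'" by (simp add: power2_eq_square algebra_simps)
    also have "\<dots> = (z - y)^2 - y^2 + 1" using sum prod by (simp add: power2_eq_square algebra_simps)
    also have "\<dots> = 0" using s by simp
    finally have "z = w \<or> z = w'" by simp
    then show "z = w" using s(3) cw'1 by auto
  qed
  then show ?thesis by (simp add: y_def w_def \<beta>_def)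
qed



lemma final_alg:
  fixes U :: complex and B :: real
  assumes B: "B > 0" and rh: "R = U / of_real (sqrt B)"
  shows "U powi m = complex_of_real (B powr (real_of_int m / 2)) * R powi m"
proof -
  define \<beta> where "\<beta> = sqrt B"
  have b0: "\<beta> > 0" using B by (simp add: \<beta>_def)
  have "\<beta> powi m = \<beta> powr (real_of_int m)" using b0 by (simp add: powr_real_of_int')
  also have "\<dots> = (B powr (1/2)) powr (real_of_int m)" using B by (simp add: \<beta>_def powr_half_sqrt)
  also have "\<dots> = B powr (real_of_int m / 2)" by (simp add: powr_powr)
  finally have e: "B powr (real_of_int m / 2) = \<beta> powi m" by simp
  have nz: "(complex_of_real \<beta>) powi m \<noteq> 0" using b0 by simp
  show ?thesis unfolding rh e \<beta>_def[symmetric] power_int_divide_distrib of_real_power_int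
    using nz by simp
qed

theorem mainTheorem8:
  fixes c d r :: real and m :: int and x :: complex
  assumes "c > 0" and "d > 0" and "0 < r" and "r < 1"
    and "x \<notin> complex_of_real ` {-d..c}"
  shows "(\<lambda>p::nat. Phat c d (r powr (1 / real p)) x (nat (int p + m))
                 / Phat c d (r powr (1 / real p)) x p)
         \<longlonglongrightarrow> complex_of_real ((c * d * r * (1 - r)) powr (real_of_int m / 2))
             * (rho ((x - complex_of_real (r * (c - d)))
                      / complex_of_real (2 * sqrt (r * c * d * (1 - r))))) powi m"
proof -
  note cd = assms(1,2) and r = assms(3,4)
  obtain \<delta> where dl: "\<delta> > 0" "\<forall>y::real. -d - \<delta> \<le> y \<and> y \<le> c + \<delta> \<longrightarrow> cmod (x - of_real y) \<ge> \<delta>"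
    using delta_exists[OF assms(5)] cd by force
  define g where "g = \<delta>/2"
  define M where "M = cmod x + \<bar>c - d\<bar> + c*d/(r*g)"
  define q where "q = (\<lambda>p::nat. r powr (1 / real p))"
  note LIMS = main_lim[OF cd r dl g_def M_def q_def]
  define Xi where "Xi = x - of_real (r*(c-d))"
  define Bi where "Bi = r*c*d*(1-r)"
  define Ui where "Ui = bigroot Xi (of_real Bi)"
  have g0: "g > 0" using dl by (simp add: g_def)
  have Ulim: "\<And>j. ((\<lambda>p. ww c d x (q p) (nat (int p + j))) \<longlongrightarrow> Ui) sequentially"
    using LIMS(2) by (simp add: Ui_def Xi_def Bi_def)
  have Ugap: "cmod Ui - cmod (Xi - Ui) \<ge> g" using LIMS(3) by (simp add: Ui_def Xi_def Bi_def)
  have Unz: "Ui \<noteq> 0"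
  proof
    assume "Ui = 0"
    then have "cmod Ui = 0" by simp
    then show False using Ugap g0 norm_ge_zero[of "Xi - Ui"] by linarith
  qed
  have ev: "eventually (\<lambda>p. q p > 0 \<and> (\<forall>n. ww c d x (q p) n \<noteq> 0)) sequentially" by (rule LIMS(1))
  have key: "((\<lambda>p. Phat c d (q p) x (nat (int p + m)) / Phat c d (q p) x p) \<longlongrightarrow> Ui powi m) sequentially"
  proof (cases "m \<ge> 0")
    case True
    define k where "k = nat m"
    have mk: "m = int k" using True by (simp add: k_def)
    have evq: "eventually (\<lambda>p. (\<Prod>i<k. ww c d x (q p) (nat (int p + int i))) = Phat c d (q p) x (nat (int p + m)) / Phat c d (q p) x p) sequentially"
      using ev
    proof eventually_elim
      case (elim p)
      then have q0: "q p > 0" and nz: "\<And>n. ww c d x (q p) n \<noteq> 0" by auto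
      have "Phat c d (q p) x (p + k) = (\<Prod>i<k. ww c d x (q p) (p + i)) * Phat c d (q p) x p"
        by (rule Phat_prod[OF q0 nz])
      moreover have "Phat c d (q p) x p \<noteq> 0" by (rule Phat_nz[OF q0 nz])
      moreover have "nat (int p + m) = p + k" using mk by simp
      moreover have "\<And>i. nat (int p + int i) = p + i" by simp
      ultimately show ?case by simp
    qed
    have "((\<lambda>p. \<Prod>i<k. ww c d x (q p) (nat (int p + int i))) \<longlongrightarrow> (\<Prod>i<k. Ui)) sequentially"
      by (intro tendsto_prod Ulim)
    then have "((\<lambda>p. Phat c d (q p) x (nat (int p + m)) / Phat c d (q p) x p) \<longlongrightarrow> (\<Prod>i<k. Ui)) sequentially"
      using Lim_transform_eventually[OF _ evq] by blast
    then show ?thesis using mk by simp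
  next
    case False
    define k where "k = nat (-m)"
    have mk: "m = - int k" using False by (simp add: k_def)
    have evq: "eventually (\<lambda>p. 1 / (\<Prod>i<k. ww c d x (q p) (nat (int p + (m + int i)))) = Phat c d (q p) x (nat (int p + m)) / Phat c d (q p) x p) sequentially"
      using ev eventually_ge_at_top[of k]
    proof eventually_elim
      case (elim p)
      then have q0: "q p > 0" and nz: "\<And>n. ww c d x (q p) n \<noteq> 0" and pk: "p \<ge> k" by auto
      have "Phat c d (q p) x ((p - k) + k) = (\<Prod>i<k. ww c d x (q p) ((p - k) + i)) * Phat c d (q p) x (p - k)"
        by (rule Phat_prod[OF q0 nz])
      moreover have "Phat c d (q p) x (p - k) \<noteq> 0" by (rule Phat_nz[OF q0 nz])
      moreover have "nat (int p + m) = p - k" using mk pk by simp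
      moreover have "\<And>i. nat (int p + (m + int i)) = (p - k) + i" using mk pk by simp
      moreover have "(p - k) + k = p" using pk by simp
      ultimately show ?case by simp
    qed
    have "((\<lambda>p. 1 / (\<Prod>i<k. ww c d x (q p) (nat (int p + (m + int i))))) \<longlongrightarrow> 1 / (\<Prod>i<k. Ui)) sequentially"
      using Unz by (intro tendsto_intros Ulim) simp
    then have "((\<lambda>p. Phat c d (q p) x (nat (int p + m)) / Phat c d (q p) x p) \<longlongrightarrow> 1 / (\<Prod>i<k. Ui)) sequentially"
      using Lim_transform_eventually[OF _ evq] by blast
    then show ?thesis using mk by (simp add: power_int_minus divide_inverse)
  qed
  have Bi0: "Bi > 0" using cd r by (simp add: Bi_def)
  have rh: "rho (Xi / of_real (2 * sqrt Bi)) = Ui / of_real (sqrt Bi)"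
  proof (rule rho_eq)
    show "Ui + (Xi - Ui) = Xi" by simp
    show "Ui * (Xi - Ui) = of_real Bi" by (simp add: Ui_def bigroot_prod)
    show "Bi > 0" by (rule Bi0)
    show "cmod Ui - cmod (Xi - Ui) > 0" using Ugap g0 by linarith
  qed
  have eq0: "Ui powi m = complex_of_real (Bi powr (real_of_int m / 2)) * (rho (Xi / of_real (2 * sqrt Bi))) powi m"
    by (rule final_alg[OF Bi0 rh])
  have e2: "c*d*r*(1-r) = Bi" by (simp add: Bi_def algebra_simps)
  have e3: "r*c*d*(1-r) = Bi" by (simp add: Bi_def)
  have e4: "x - complex_of_real (r*(c-d)) = Xi" by (simp add: Xi_def)
  show ?thesis unfolding e2 e3 e4 eq0[symmetric] using key unfolding q_def .
qed

end
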